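(* Consider a floating-base serial chain of $N$ rigid bodies, as described in the context, in the absence of gravity. For $i=2,\ldots,N$ define the inertia-transfer subspace $$\mathcal{T}_i=\Big\{\delta\boldsymbol{\pi}\in\mathbb{R}^{10N}:\ \delta\mathbf{I}_{i-1}=-\big({}^{J_i}\mathbf{X}_{i-1}\big)^{\top}\delta\mathbf{I}_i\,{}^{J_i}\mathbf{X}_{i-1},\ \ \boldsymbol{\Phi}_i^{\top}\delta\mathbf{I}_i=\mathbf{0},\ \ (\boldsymbol{\Phi}_i\times)^{\top}\delta\mathbf{I}_i+\delta\mathbf{I}_i(\boldsymbol{\Phi}_i\times)=\mathbf{0},\ \ \delta\mathbf{I}_j=\mathbf{0}\text{ for } j\notin\{i,i-1\}\Big\},$$ where $\delta\mathbf{I}_j=[\delta\boldsymbol{\pi}_j]^{\wedge}$. Then the parameter nullspace satisfies $$\mathcal{N}=\bigoplus_{i=2}^{N}\mathcal{T}_i,$$ the direct sum of vector subspaces.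
   Context: Spatial notation. For $\mathbf{x}\in\mathbb{R}^3$, $\mathbf{S}(\mathbf{x})$ is the skew-symmetric matrix with $\mathbf{S}(\mathbf{x})\mathbf{y}=\mathbf{x}\times\mathbf{y}$. For a spatial vector $\mathbf{v}=[\boldsymbol{\omega};\mathbf{u}]\in\mathbb{R}^6$ ($\boldsymbol\omega,\mathbf u\in\mathbb R^3$), the spatial cross-product matrix is $(\mathbf{v}\times)=\begin{bmatrix}\mathbf{S}(\boldsymbol{\omega})&\mathbf{0}\\ \mathbf{S}(\mathbf{u})&\mathbf{S}(\boldsymbol{\omega})\end{bmatrix}\in\mathbb{R}^{6\times6}$. A spatial transform is a matrix $\begin{bmatrix}\mathbf{R}&\mathbf{0}\\-\mathbf{R}\mathbf{S}(\mathbf{p})&\mathbf{R}\end{bmatrix}$ with $\mathbf{R}\in SO(3)$, $\mathbf{p}\in\mathbb{R}^3$. The inertial parameters of a body are $\boldsymbol{\pi}=[m,h_x,h_y,h_z,I_{xx},I_{xy},I_{xz},I_{yy},I_{yz},I_{zz}]^\top\in\mathbb{R}^{10}$, and the (linear) map $[\cdot]^{\wedge}$ sends $\boldsymbol\pi$ to the spatial inertia $[\boldsymbol{\pi}]^{\wedge}=\begin{bmatrix}\bar{\mathbf{I}}&\mathbf{S}(\mathbf{h})\\ \mathbf{S}(\mathbf{h})^{\top}&m\mathbf{1}_3\end{bmatrix}$ with $\mathbf{h}=[h_x,h_y,h_z]^\top$ and $\bar{\mathbf{I}}$ the symmetric $3\times3$ matrix with entries $I_{xx},I_{xy},\ldots$;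 $[\cdot]^{\vee}$ is its inverse on the 10-dimensional space of such matrices. Floating-base chain. Bodies are numbered $1,\ldots,N$; body 1 (the floating base) has spatial velocity $\mathbf{v}_1\in\mathbb{R}^6$ that may take any value. For $i=2,\ldots,N$, joint $i$ is a single-DoF joint with coordinate $q_i\in\mathbb{R}$ connecting body $i-1$ to body $i$, with $\mathbf{v}_i={}^{i}\mathbf{X}_{i-1}(q_i)\mathbf{v}_{i-1}+\boldsymbol{\Phi}_i\dot q_i$, where $\boldsymbol{\Phi}_i\in\mathbb{R}^6$ is a fixed joint free-mode vector, ${}^{i}\mathbf{X}_{i-1}(q_i)={}^{i}\mathbf{X}_{J_i}(q_i)\,{}^{J_i}\mathbf{X}_{i-1}$, ${}^{J_i}\mathbf{X}_{i-1}$ is a constant spatial transform, and ${}^{i}\mathbf{X}_{J_i}(q_i)$ is a spatial transform with ${}^{i}\mathbf{X}_{J_i}(0)=\mathbf{1}_6$ and $\frac{d}{dq_i}{}^{i}\mathbf{X}_{J_i}(q_i)=-(\boldsymbol{\Phi}_i\times)\,{}^{i}\mathbf{X}_{J_i}(q_i)$. The full parameter vector is $\boldsymbol{\pi}=[\boldsymbol{\pi}_1^\top,\ldots,\boldsymbol{\pi}_N^\top]^\top\in\mathbb{R}^{10N}$, and the kinetic energy is $T=\frac12\sum_{j}\mathbf{v}_j^\top[\boldsymbol{\pi}_j]^{\wedge}\mathbf{v}_j$. The parameter nullspace $\mathcal{N}$ is the set of $\delta\boldsymbol{\pi}\in\mathbb{R}^{10N}$ such that $\sum_{j=1}^N\mathbf{v}_j^\top[\delta\boldsymbol{\pi}_j]^{\wedge}\mathbf{v}_j=0$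 for all $\mathbf{v}_1\in\mathbb{R}^6$ and all $q_i,\dot q_i$ ($i\ge2$); equivalently, the set of parameter changes leaving the mass matrix (and hence the gravity-free inverse dynamics, i.e. the regressor output $\mathbf Y(\mathbf q,\dot{\mathbf q},\ddot{\mathbf q})\delta\boldsymbol\pi$) unchanged for all states. *)

theory Defs
  imports "HOL-Analysis.Analysis" "HOL-Library.Numeral_Type"
begin

text \<open>Spatial vectors in R^6 are indexed by the type 3 + 3: index Inl k is the
  k-th angular component (omega), index Inr k the k-th linear component (u).\<close>

type_synonym sv = "real ^ (3 + 3)"
type_synonym smat = "real ^ (3 + 3) ^ (3 + 3)"

definition skew :: "real^3 \<Rightarrow> real^3^3" where
  "skew x = matrix (\<lambda>y. cross3 x y)"

definition blk :: "real^3^3 \<Rightarrow> real^3^3 \<Rightarrow> real^3^3 \<Rightarrow> real^3^3 \<Rightarrow> smat" where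
  "blk A B C D = (\<chi> i j. case i of
       Inl a \<Rightarrow> (case j of Inl b \<Rightarrow> A $ a $ b | Inr b \<Rightarrow> B $ a $ b)
     | Inr a \<Rightarrow> (case j of Inl b \<Rightarrow> C $ a $ b | Inr b \<Rightarrow> D $ a $ b))"

definition sv_ang :: "sv \<Rightarrow> real^3" where "sv_ang v = (\<chi> k. v $ Inl k)"
definition sv_lin :: "sv \<Rightarrow> real^3" where "sv_lin v = (\<chi> k. v $ Inr k)"

definition svcross :: "sv \<Rightarrow> smat" where
  "svcross v = blk (skew (sv_ang v)) 0 (skew (sv_lin v)) (skew (sv_ang v))"

definition is_stransform :: "smat \<Rightarrow> bool" where
  "is_stransform X \<longleftrightarrow> (\<exists>R p. rotation_matrix R \<and> X = blk R 0 (- (R ** skew p)) R)"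

text \<open>Inertial parameters pi = [m,hx,hy,hz,Ixx,Ixy,Ixz,Iyy,Iyz,Izz] indexed 0..9, and the
  hat map to the spatial inertia [Ibar S(h); S(h)^T m 1].\<close>
definition inertia_hat :: "real^10 \<Rightarrow> smat" where
  "inertia_hat p =
     (let m = p $ 0;
          h = vector [p $ 1, p $ 2, p $ 3] :: real^3;
          Ib = vector [vector [p $ 4, p $ 5, p $ 6],
                       vector [p $ 5, p $ 7, p $ 8],
                       vector [p $ 6, p $ 8, p $ 9]] :: real^3^3
      in blk Ib (skew h) (transpose (skew h)) (m *\<^sub>R mat 1))"

text \<open>Full parameter vectors in R^{10N}: functions on body indices, zero outside 1..N.\<close>
definition params :: "nat \<Rightarrow> (nat \<Rightarrow> real^10) set" where
  "params N = {dp. \<forall>j. j \<notin> {1..N} \<longrightarrow> dp j = 0}"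

fun vel :: "(nat \<Rightarrow> sv) \<Rightarrow> (nat \<Rightarrow> smat) \<Rightarrow> (nat \<Rightarrow> real \<Rightarrow> smat)
            \<Rightarrow> sv \<Rightarrow> (nat \<Rightarrow> real) \<Rightarrow> (nat \<Rightarrow> real) \<Rightarrow> nat \<Rightarrow> sv" where
  "vel Phi XJ Xq v1 q qd 0 = v1"
| "vel Phi XJ Xq v1 q qd (Suc 0) = v1"
| "vel Phi XJ Xq v1 q qd (Suc (Suc k)) =
     (Xq (Suc (Suc k)) (q (Suc (Suc k))) ** XJ (Suc (Suc k))) *v vel Phi XJ Xq v1 q qd (Suc k)
     + qd (Suc (Suc k)) *\<^sub>R Phi (Suc (Suc k))"

definition param_nullspace ::
  "nat \<Rightarrow> (nat \<Rightarrow> sv) \<Rightarrow> (nat \<Rightarrow> smat) \<Rightarrow> (nat \<Rightarrow> real \<Rightarrow> smat) \<Rightarrow> (nat \<Rightarrow> real^10) set" where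
  "param_nullspace N Phi XJ Xq =
     {dp \<in> params N. \<forall>v1 q qd.
        (\<Sum>j=1..N. vel Phi XJ Xq v1 q qd j \<bullet> (inertia_hat (dp j) *v vel Phi XJ Xq v1 q qd j)) = 0}"

definition transfer_space ::
  "nat \<Rightarrow> (nat \<Rightarrow> sv) \<Rightarrow> (nat \<Rightarrow> smat) \<Rightarrow> nat \<Rightarrow> (nat \<Rightarrow> real^10) set" where
  "transfer_space N Phi XJ i =
     {dp \<in> params N.
        inertia_hat (dp (i - 1)) = - (transpose (XJ i) ** inertia_hat (dp i) ** XJ i)
      \<and> Phi i v* inertia_hat (dp i) = 0
      \<and> transpose (svcross (Phi i)) ** inertia_hat (dp i) + inertia_hat (dp i) ** svcross (Phi i) = 0
      \<and> (\<forall>j\<in>{1..N}. j \<notin> {i, i - 1} \<longrightarrow> inertia_hat (dp j) = 0)}"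

definition is_direct_sum :: "(nat \<Rightarrow> real^10) set \<Rightarrow> (nat \<Rightarrow> (nat \<Rightarrow> real^10) set) \<Rightarrow> nat set \<Rightarrow> bool" where
  "is_direct_sum V W I \<longleftrightarrow>
     V = {(\<lambda>j. \<Sum>i\<in>I. t i j) | t. \<forall>i\<in>I. t i \<in> W i}
   \<and> (\<forall>t. (\<forall>i\<in>I. t i \<in> W i) \<and> (\<lambda>j. \<Sum>i\<in>I. t i j) = (\<lambda>j. 0) \<longrightarrow> (\<forall>i\<in>I. t i = (\<lambda>j. 0)))"

end

theory Submission
  imports Defs
begin


lemma mm_add_r: "((A::real^'n^'m) + B) ** (C::real^'p^'n) = A ** C + B ** C"
  by (simp add: matrix_matrix_mult_def vec_eq_iff distrib_right sum.distrib)
lemma mm_scale_r: "((c::real) *\<^sub>R (A::real^'n^'m)) ** (C::real^'p^'n) = c *\<^sub>R (A ** C)"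
  by (simp add: matrix_matrix_mult_def vec_eq_iff sum_distrib_left mult.assoc)
lemma mm_scale_l: "(A::real^'n^'m) ** ((c::real) *\<^sub>R (C::real^'p^'n)) = c *\<^sub>R (A ** C)"
  by (simp add: matrix_matrix_mult_def vec_eq_iff sum_distrib_left algebra_simps)

lemma mm_uminus_l: "(- (A::real^'n^'m)) ** (C::real^'p^'n) = - (A ** C)"
  by (simp add: matrix_matrix_mult_def vec_eq_iff sum_negf)
lemma mm_uminus_r: "(A::real^'n^'m) ** (- (C::real^'p^'n)) = - (A ** C)"
  by (simp add: matrix_matrix_mult_def vec_eq_iff sum_negf)

lemma bilinear_mm: "bilinear (\<lambda>(A::real^'n^'m) (B::real^'p^'n). A ** B)"
  unfolding bilinear_def
  by (auto intro!: linearI simp: mm_add_r mm_scale_r mm_scale_l matrix_add_ldistrib)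

lemma bb_mm: "bounded_bilinear (\<lambda>(A::real^'n::finite^'m::finite) (B::real^'p::finite^'n). A ** B)"
  using bilinear_mm bilinear_conv_bounded_bilinear by blast

lemma transpose_add: "transpose ((A::real^'n^'m) + B) = transpose A + transpose B"
  by (simp add: transpose_def vec_eq_iff)
lemma transpose_uminus: "transpose (- (A::real^'n^'m)) = - transpose A"
  by (simp add: transpose_def vec_eq_iff)
lemma transpose_zero: "transpose (0::real^'n^'m) = 0"
  by (simp add: transpose_def vec_eq_iff)

lemma bl_transpose: "bounded_linear (transpose :: real^'n::finite^'m::finite \<Rightarrow> _)"
proof -
  have "linear (transpose :: real^'n::finite^'m::finite \<Rightarrow> _)"
    by (auto intro!: linearI simp: transpose_add transpose_scalar)
  then show ?thesis using linear_conv_bounded_linear by blast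
qed

lemma deriv_congr:
  fixes X :: "real \<Rightarrow> real^'n::finite^'n"
  assumes "(X has_vector_derivative D) (at x)"
  shows "((\<lambda>x. transpose (X x) ** A ** X x) has_vector_derivative
           (transpose D ** A ** X x + transpose (X x) ** A ** D)) (at x)"
proof -
  have t: "((\<lambda>x. transpose (X x)) has_vector_derivative transpose D) (at x)"
    using bounded_linear.has_vector_derivative[OF bl_transpose assms] .
  have c: "((\<lambda>x. A) has_vector_derivative 0) (at x)" by (rule has_vector_derivative_const)
  have 1: "((\<lambda>x. transpose (X x) ** A) has_vector_derivative (transpose (X x) ** 0 + transpose D ** A)) (at x)"
    using bounded_bilinear.has_vector_derivative[OF bb_mm t c] .
  have 2: "((\<lambda>x. (transpose (X x) ** A) ** X x) has_vector_derivative
     ((transpose (X x) ** A) ** D + (transpose (X x) ** 0 + transpose D ** A) ** X x)) (at x)"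
    using bounded_bilinear.has_vector_derivative[OF bb_mm 1 assms] .
  show ?thesis using 2 by (simp add: add.commute)
qed



lemma all_sum: "(\<forall>x::'a+'b. P x) \<longleftrightarrow> (\<forall>a. P (Inl a)) \<and> (\<forall>b. P (Inr b))"
  by (metis sum.exhaust)

lemma sum_UNIV_plus: "sum f (UNIV::('a::finite+'b::finite) set) = sum (\<lambda>a. f (Inl a)) UNIV + sum (\<lambda>b. f (Inr b)) UNIV"
proof -
  have "sum f (UNIV::('a+'b) set) = sum f (UNIV <+> UNIV)" by simp
  also have "\<dots> = sum (\<lambda>a. f (Inl a)) UNIV + sum (\<lambda>b. f (Inr b)) UNIV"
    by (subst sum.Plus) (auto simp: o_def)
  finally show ?thesis .
qed

lemma blk_nth: "blk A B C D $ Inl a $ Inl b = A $ a $ b" "blk A B C D $ Inl a $ Inr b = B $ a $ b"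
  "blk A B C D $ Inr a $ Inl b = C $ a $ b" "blk A B C D $ Inr a $ Inr b = D $ a $ b"
  by (simp_all add: blk_def)

lemma blk_eq_iff: "blk A B C D = blk A' B' C' D' \<longleftrightarrow> A = A' \<and> B = B' \<and> C = C' \<and> D = D'"
  by (auto simp: vec_eq_iff all_sum blk_nth)

lemma blk_ext: "M = blk (\<chi> a b. M $ Inl a $ Inl b) (\<chi> a b. M $ Inl a $ Inr b) (\<chi> a b. M $ Inr a $ Inl b) (\<chi> a b. M $ Inr a $ Inr b)"
  by (simp add: vec_eq_iff all_sum blk_nth)

lemma blk_mult: "blk A B C D ** blk E F G H = blk (A**E + B**G) (A**F + B**H) (C**E + D**G) (C**F + D**H)"
  by (simp add: vec_eq_iff all_sum blk_nth matrix_matrix_mult_def sum_UNIV_plus)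

lemma blk_transpose: "transpose (blk A B C D) = blk (transpose A) (transpose C) (transpose B) (transpose D)"
  by (simp add: vec_eq_iff all_sum blk_nth transpose_def)

lemma blk_add: "blk A B C D + blk A' B' C' D' = blk (A+A') (B+B') (C+C') (D+D')"
  by (simp add: vec_eq_iff all_sum blk_nth)
lemma blk_uminus: "- blk A B C D = blk (-A) (-B) (-C) (-D)"
  by (simp add: vec_eq_iff all_sum blk_nth)
lemma blk_scale: "c *\<^sub>R blk A B C D = blk (c *\<^sub>R A) (c *\<^sub>R B) (c *\<^sub>R C) (c *\<^sub>R D)"
  by (simp add: vec_eq_iff all_sum blk_nth)
lemma blk_zero: "(0::smat) = blk 0 0 0 0"
  by (simp add: vec_eq_iff all_sum blk_nth)
lemma blk_one: "(mat 1::smat) = blk (mat 1) 0 0 (mat 1)"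
  by (simp add: vec_eq_iff all_sum blk_nth mat_def)

lemma skew_explicit: "skew x = vector [vector [0, - x$3, x$2], vector [x$3, 0, - x$1], vector [- x$2, x$1, 0]]"
  unfolding skew_def
  by (simp add: vec_eq_iff forall_3 matrix_def cross3_def axis_def vector_3)



lemma exhaust_10:
  fixes x :: 10
  shows "x = 0 \<or> x = 1 \<or> x = 2 \<or> x = 3 \<or> x = 4 \<or> x = 5 \<or> x = 6 \<or> x = 7 \<or> x = 8 \<or> x = 9"
proof (induct x)
  case (of_int z)
  then have "z = 0 \<or> z = 1 \<or> z = 2 \<or> z = 3 \<or> z = 4 \<or> z = 5 \<or> z = 6 \<or> z = 7 \<or> z = 8 \<or> z = 9" by simp presburger
  then show ?case by auto
qed

lemma forall_10: "(\<forall>i::10. P i) \<longleftrightarrow> P 0 \<and> P 1 \<and> P 2 \<and> P 3 \<and> P 4 \<and> P 5 \<and> P 6 \<and> P 7 \<and> P 8 \<and> P 9"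
  by (metis exhaust_10)

definition Ibar :: "real^10 \<Rightarrow> real^3^3" where
  "Ibar p = vector [vector [p $ 4, p $ 5, p $ 6], vector [p $ 5, p $ 7, p $ 8], vector [p $ 6, p $ 8, p $ 9]]"
definition hvec :: "real^10 \<Rightarrow> real^3" where
  "hvec p = vector [p $ 1, p $ 2, p $ 3]"

lemma hat_blk: "inertia_hat p = blk (Ibar p) (skew (hvec p)) (transpose (skew (hvec p))) ((p $ 0) *\<^sub>R mat 1)"
  by (simp add: inertia_hat_def Ibar_def hvec_def Let_def)

lemma Ibar_add: "Ibar (x + y) = Ibar x + Ibar y"
  by (simp add: Ibar_def vec_eq_iff forall_3 vector_3)
lemma Ibar_scale: "Ibar (c *\<^sub>R x) = c *\<^sub>R Ibar x"
  by (simp add: Ibar_def vec_eq_iff forall_3 vector_3)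
lemma hvec_add: "hvec (x + y) = hvec x + hvec y"
  by (simp add: hvec_def vec_eq_iff forall_3 vector_3)
lemma hvec_scale: "hvec (c *\<^sub>R x) = c *\<^sub>R hvec x"
  by (simp add: hvec_def vec_eq_iff forall_3 vector_3)
lemma skew_add: "skew (x + y) = skew x + skew y"
  by (simp add: skew_explicit vec_eq_iff forall_3 vector_3)
lemma skew_scale: "skew (c *\<^sub>R x) = c *\<^sub>R skew x"
  by (simp add: skew_explicit vec_eq_iff forall_3 vector_3)
lemma skew_transpose: "transpose (skew x) = - skew x"
  by (simp add: skew_explicit vec_eq_iff forall_3 vector_3 transpose_def)
lemma Ibar_transpose: "transpose (Ibar x) = Ibar x"
  by (simp add: Ibar_def vec_eq_iff forall_3 vector_3 transpose_def)

lemma hat_add: "inertia_hat (x + y) = inertia_hat x + inertia_hat y"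
  by (simp add: hat_blk blk_add Ibar_add hvec_add skew_add transpose_add scaleR_add_left)
lemma hat_scale: "inertia_hat (c *\<^sub>R x) = c *\<^sub>R inertia_hat x"
  by (simp add: hat_blk blk_scale Ibar_scale hvec_scale skew_scale transpose_scalar)
lemma linear_hat: "linear inertia_hat"
  by (auto intro!: linearI simp: hat_add hat_scale)
lemma hat_zero: "inertia_hat 0 = 0"
  using linear_0[OF linear_hat] .
lemma hat_sym: "transpose (inertia_hat p) = inertia_hat p"
  by (simp add: hat_blk blk_transpose Ibar_transpose transpose_scalar)

lemma hat_inj: "inertia_hat p = 0 \<Longrightarrow> p = 0"
proof -
  assume h: "inertia_hat p = 0"
  have e: "\<And>i j. inertia_hat p $ i $ j = 0" using h by simp
  have "p $ 0 = 0" using e[of "Inr 1" "Inr 1"] by (simp add: hat_blk blk_nth mat_def)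
  moreover have "p $ 4 = 0 \<and> p $ 5 = 0 \<and> p $ 6 = 0 \<and> p $ 7 = 0 \<and> p $ 8 = 0 \<and> p $ 9 = 0"
    using e[of "Inl 1" "Inl 1"] e[of "Inl 1" "Inl 2"] e[of "Inl 1" "Inl 3"]
      e[of "Inl 2" "Inl 2"] e[of "Inl 2" "Inl 3"] e[of "Inl 3" "Inl 3"]
    by (simp add: hat_blk blk_nth Ibar_def vector_3)
  moreover have "p $ 1 = 0 \<and> p $ 2 = 0 \<and> p $ 3 = 0"
    using e[of "Inl 3" "Inr 2"] e[of "Inl 1" "Inr 3"] e[of "Inl 2" "Inr 1"]
    by (simp add: hat_blk blk_nth hvec_def skew_explicit vector_3)
  ultimately show "p = 0" by (simp add: vec_eq_iff forall_10)
qed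



lemma hat_surj:
  assumes B: "transpose B = B" and S: "transpose S = - S"
  shows "\<exists>p. inertia_hat p = blk B S (transpose S) (c *\<^sub>R mat 1)"
proof -
  have Be: "\<And>i j. B $ j $ i = B $ i $ j"
  proof -
    fix i j have "transpose B $ i $ j = B $ i $ j" using B by simp
    then show "B $ j $ i = B $ i $ j" by (simp add: transpose_def)
  qed
  have Se: "\<And>i j. S $ j $ i = - S $ i $ j"
  proof -
    fix i j have "transpose S $ i $ j = (- S) $ i $ j" using S by simp
    then show "S $ j $ i = - S $ i $ j" by (simp add: transpose_def)
  qed
  have Sd: "\<And>i. S $ i $ i = 0"
  proof -
    fix i have "S $ i $ i = - S $ i $ i" by (rule Se)
    then show "S $ i $ i = 0" by simp
  qed
  define p :: "real^10" where "p = (\<chi> i. if i = 0 then c else if i = 1 then S$3$2 else if i=2 then S$1$3 else if i = 3 then S$2$1 else if i = 4 then B$1$1 else if i=5 then B$1$2 else if i=6 then B$1$3 else if i=7 then B$2$2 else if i=8 then B$2$3 else B$3$3)"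
  have pe: "p $ 4 = B$1$1" "p $ 5 = B$1$2" "p $ 6 = B$1$3" "p $ 7 = B$2$2" "p $ 8 = B$2$3" "p $ 9 = B$3$3"
    "p $ 1 = S$3$2" "p $ 2 = S$1$3" "p $ 3 = S$2$1" "p $ 0 = c"
    by (simp_all add: p_def)
  have b1: "B$2$1 = B$1$2" "B$3$1 = B$1$3" "B$3$2 = B$2$3" by (rule Be)+
  have s1: "S$2$3 = - S$3$2" "S$3$1 = - S$1$3" "S$1$2 = - S$2$1" by (rule Se)+
  have "Ibar p = B"
    unfolding Ibar_def pe by (simp add: vec_eq_iff forall_3 vector_3 b1)
  moreover have "skew (hvec p) = S"
    unfolding skew_explicit hvec_def by (simp add: pe vec_eq_iff forall_3 vector_3 Sd s1)
  ultimately have "inertia_hat p = blk B S (transpose S) (c *\<^sub>R mat 1)" by (simp add: hat_blk pe)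
  then show ?thesis by blast
qed



lemma hat_congr:
  assumes "is_stransform X"
  shows "\<exists>p'. inertia_hat p' = transpose X ** inertia_hat p ** X"
proof -
  obtain R q where rot: "rotation_matrix R" and X: "X = blk R 0 (- (R ** skew q)) R"
    using assms unfolding is_stransform_def by blast
  have RR: "transpose R ** R = mat 1" using rot by (simp add: rotation_matrix_def orthogonal_matrix_def)
  define C where "C = - (R ** skew q)"
  define Ib where "Ib = Ibar p"
  define S where "S = skew (hvec p)"
  define m where "m = p $ 0"
  define A1 where "A1 = (transpose R ** Ib + transpose C ** transpose S) ** R + (transpose R ** S + transpose C ** (m *\<^sub>R mat 1)) ** C"
  define A2 where "A2 = (transpose R ** S + transpose C ** (m *\<^sub>R mat 1)) ** R"
  define A3 where "A3 = (transpose R ** transpose S) ** R + (transpose R ** (m *\<^sub>R mat 1)) ** C"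
  define A4 where "A4 = (transpose R ** (m *\<^sub>R mat 1)) ** R"
  have M: "transpose X ** inertia_hat p ** X = blk A1 A2 A3 A4"
    unfolding X hat_blk A1_def A2_def A3_def A4_def C_def Ib_def S_def m_def
    by (simp add: blk_transpose blk_mult transpose_zero)
  have sym: "transpose (transpose X ** inertia_hat p ** X) = transpose X ** inertia_hat p ** X"
    by (simp add: matrix_transpose_mul hat_sym matrix_mul_assoc)
  then have "blk (transpose A1) (transpose A3) (transpose A2) (transpose A4) = blk A1 A2 A3 A4"
    unfolding M blk_transpose .
  then have s1: "transpose A1 = A1" and s3: "A3 = transpose A2" by (auto simp: blk_eq_iff)
  have a4: "A4 = m *\<^sub>R mat 1" unfolding A4_def by (simp add: mm_scale_l mm_scale_r RR)
  have CR: "transpose C ** R = skew q"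
  proof -
    have "transpose C ** R = - ((transpose (skew q) ** transpose R) ** R)"
      unfolding C_def by (simp add: transpose_uminus matrix_transpose_mul mm_uminus_l)
    also have "\<dots> = - transpose (skew q)" by (simp add: matrix_mul_assoc[symmetric] RR)
    finally show ?thesis by (simp add: skew_transpose)
  qed
  have a2: "A2 = transpose R ** S ** R + m *\<^sub>R skew q"
    unfolding A2_def by (simp add: mm_add_r mm_scale_l mm_scale_r matrix_mul_assoc[symmetric] CR)
  have s2: "transpose A2 = - A2"
    unfolding a2 by (simp add: transpose_add transpose_scalar matrix_transpose_mul skew_transpose
       S_def mm_uminus_l mm_uminus_r matrix_mul_assoc)
  obtain p' where "inertia_hat p' = blk A1 A2 (transpose A2) (m *\<^sub>R mat 1)"
    using hat_surj[OF s1 s2] by blast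
  then show ?thesis using M s3 a4 by metis
qed



lemma dot_transpose: "(x::real^'n) \<bullet> ((A::real^'m^'n) *v y) = (transpose A *v x) \<bullet> y"
  by (simp add: inner_vec_def matrix_vector_mult_def transpose_def sum_distrib_left sum_distrib_right
      ac_simps) (rule sum.swap)

lemma quad_zero:
  fixes A :: "real^'n^'n"
  assumes s: "transpose A = A" and z: "\<And>v. v \<bullet> (A *v v) = 0"
  shows "A = 0"
proof -
  have c: "u \<bullet> (A *v v) = 0" for u v
  proof -
    have "(u + v) \<bullet> (A *v (u + v)) = 0" by (rule z)
    then have "u \<bullet> (A *v v) + v \<bullet> (A *v u) = 0"
      using z[of u] z[of v] by (simp add: matrix_vector_right_distrib inner_add_left inner_add_right)
    moreover have "v \<bullet> (A *v u) = u \<bullet> (A *v v)"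
      by (metis dot_transpose inner_commute s)
    ultimately show ?thesis by simp
  qed
  have "A *v v = 0" for v using c[of "A *v v" v] by simp
  then show ?thesis by (simp add: matrix_eq)
qed

lemma stransform_rinv:
  assumes "is_stransform X" shows "\<exists>Y. X ** Y = mat 1"
proof -
  obtain R q where rot: "rotation_matrix R" and X: "X = blk R 0 (- (R ** skew q)) R"
    using assms unfolding is_stransform_def by blast
  have RR: "R ** transpose R = mat 1" using rot by (simp add: rotation_matrix_def orthogonal_matrix_def)
  define Y where "Y = blk (transpose R) 0 (transpose R ** (R ** skew q) ** transpose R) (transpose R)"
  have "X ** Y = mat 1"
    unfolding X Y_def blk_one
    by (simp add: blk_mult RR matrix_mul_assoc mm_uminus_l)
  then show ?thesis by blast
qed

lemma invariance:
  fixes X :: "real \<Rightarrow> smat"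
  assumes d: "\<And>x. (X has_vector_derivative (- (P ** X x))) (at x)"
    and X0: "X 0 = mat 1"
    and c: "transpose P ** A + A ** P = 0"
  shows "transpose (X x) ** A ** X x = A"
proof -
  have "((\<lambda>x. transpose (X x) ** A ** X x) has_vector_derivative 0) (at x)" for x
  proof -
    have e: "transpose (- (P ** X x)) ** A ** X x + transpose (X x) ** A ** (- (P ** X x)) =
       - (transpose (X x) ** (transpose P ** A + A ** P) ** X x)"
      by (simp add: transpose_uminus matrix_transpose_mul mm_uminus_l mm_uminus_r matrix_add_ldistrib mm_add_r
          matrix_mul_assoc)
    show ?thesis using deriv_congr[OF d[of x], of A] unfolding e c by simp
  qed
  then have "\<exists>k. \<forall>x\<in>UNIV. transpose (X x) ** A ** X x = k"
    by (intro has_derivative_zero_constant) (auto simp: has_vector_derivative_def)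
  then obtain k where k: "\<And>x. transpose (X x) ** A ** X x = k" by blast
  have "k = A" using k[of 0] X0 by simp
  then show ?thesis using k by simp
qed

lemma invariance_conv:
  fixes X :: "real \<Rightarrow> smat"
  assumes d: "\<And>x. (X has_vector_derivative (- (P ** X x))) (at x)"
    and X0: "X 0 = mat 1"
    and inv: "\<And>x. transpose (X x) ** A ** X x = A"
  shows "transpose P ** A + A ** P = 0"
proof -
  have 1: "((\<lambda>x. transpose (X x) ** A ** X x) has_vector_derivative
      (transpose (- (P ** X 0)) ** A ** X 0 + transpose (X 0) ** A ** (- (P ** X 0)))) (at 0)"
    by (rule deriv_congr[OF d])
  have 2: "((\<lambda>x. transpose (X x) ** A ** X x) has_vector_derivative 0) (at 0)"
    using inv by (simp add: has_vector_derivative_const)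
  have "transpose (- (P ** X 0)) ** A ** X 0 + transpose (X 0) ** A ** (- (P ** X 0)) = 0"
    using vector_derivative_unique_at[OF 1 2] .
  then show ?thesis using X0
    by (simp add: transpose_uminus mm_uminus_l mm_uminus_r) (metis add.commute neg_eq_iff_add_eq_0 minus_add_distrib neg_0_equal_iff_equal)
qed



definition KE where
  "KE N Phi XJ Xq dp v1 q qd = (\<Sum>j=1..N. vel Phi XJ Xq v1 q qd j \<bullet> (inertia_hat (dp j) *v vel Phi XJ Xq v1 q qd j))"

lemma nullspace_iff: "dp \<in> param_nullspace N Phi XJ Xq \<longleftrightarrow> dp \<in> params N \<and> (\<forall>v1 q qd. KE N Phi XJ Xq dp v1 q qd = 0)"
  by (simp add: param_nullspace_def KE_def)

lemma vel_1: "vel Phi XJ Xq v1 q qd (Suc 0) = v1" by simp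

lemma vel_step: "2 \<le> k \<Longrightarrow> vel Phi XJ Xq v1 q qd k = (Xq k (q k) ** XJ k) *v vel Phi XJ Xq v1 q qd (k - 1) + qd k *\<^sub>R Phi k"
proof -
  assume "2 \<le> k"
  then obtain k' where "k = Suc (Suc k')" by (metis add_2_eq_Suc le_Suc_ex)
  then show ?thesis by simp
qed

lemma vel_local: "(\<And>k. k \<le> j \<Longrightarrow> q k = q' k \<and> qd k = qd' k) \<Longrightarrow> vel Phi XJ Xq v1 q qd j = vel Phi XJ Xq v1 q' qd' j"
proof (induction j rule: less_induct)
  case (less j)
  show ?case
  proof (cases "j \<le> 1")
    case True then show ?thesis by (cases j) auto
  next
    case False
    then have "vel Phi XJ Xq v1 q qd (j - 1) = vel Phi XJ Xq v1 q' qd' (j - 1)"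
      using less by auto
    then show ?thesis using False vel_step[of j] less.prems by auto
  qed
qed

lemma hat_sum: "finite I \<Longrightarrow> inertia_hat (\<Sum>i\<in>I. f i) = (\<Sum>i\<in>I. inertia_hat (f i))"
  by (induction I rule: finite_induct) (auto simp: hat_zero hat_add)

lemma mv_sum: "finite I \<Longrightarrow> (\<Sum>i\<in>I. (M i :: real^'n^'m)) *v v = (\<Sum>i\<in>I. M i *v v)"
  by (induction I rule: finite_induct) (auto simp: matrix_vector_mult_add_rdistrib)

lemma hat_diff: "inertia_hat (x - y) = inertia_hat x - inertia_hat y"
  using hat_add[of "x - y" y] by (simp add: algebra_simps)

lemma KE_sum: "finite I \<Longrightarrow> KE N Phi XJ Xq (\<lambda>j. \<Sum>i\<in>I. t i j) v1 q qd = (\<Sum>i\<in>I. KE N Phi XJ Xq (t i) v1 q qd)"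
  unfolding KE_def by (simp add: hat_sum mv_sum inner_sum_right) (rule sum.swap)

lemma KE_diff: "KE N Phi XJ Xq (\<lambda>j. dp j - s j) v1 q qd = KE N Phi XJ Xq dp v1 q qd - KE N Phi XJ Xq s v1 q qd"
  unfolding KE_def by (simp add: hat_diff matrix_vector_mult_diff_rdistrib inner_diff_right sum_subtractf)

lemma quad_shift: "(X *v u) \<bullet> (A *v (X *v u)) = u \<bullet> ((transpose X ** A ** X) *v (u::real^'n))"
proof -
  have "(X *v u) \<bullet> (A *v (X *v u)) = (A *v (X *v u)) \<bullet> (X *v u)" by (rule inner_commute)
  also have "\<dots> = (transpose X *v (A *v (X *v u))) \<bullet> u" by (rule dot_transpose)
  also have "transpose X *v (A *v (X *v u)) = (transpose X ** A ** X) *v u"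
    by (simp add: matrix_vector_mul_assoc matrix_mul_assoc)
  finally show ?thesis by (simp add: inner_commute)
qed



lemma mv_scale: "(A::real^'n^'m) *v (c *\<^sub>R x) = c *\<^sub>R (A *v x)"
  by (simp add: matrix_vector_mult_def vec_eq_iff sum_distrib_left algebra_simps)

lemma mv_uminus: "(- (A::real^'n^'m)) *v x = - (A *v x)"
  by (simp add: matrix_vector_mult_def vec_eq_iff sum_negf)

lemma T_in_N:
  assumes d: "\<forall>x. (Xq i has_vector_derivative - (svcross (Phi i) ** Xq i x)) (at x)"
    and X0: "Xq i 0 = mat 1" and i: "i \<in> {2..N}" and t: "t \<in> transfer_space N Phi XJ i"
  shows "KE N Phi XJ Xq t v1 q qd = 0"
proof -
  define A where "A = inertia_hat (t i)"
  from t have h1: "inertia_hat (t (i - 1)) = - (transpose (XJ i) ** A ** XJ i)"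
    and h2: "Phi i v* A = 0" and h3: "transpose (svcross (Phi i)) ** A + A ** svcross (Phi i) = 0"
    and h4: "\<forall>j\<in>{1..N}. j \<notin> {i, i - 1} \<longrightarrow> inertia_hat (t j) = 0"
    unfolding transfer_space_def A_def by auto
  have As: "transpose A = A" unfolding A_def by (rule hat_sym)
  have P1: "Phi i \<bullet> (A *v y) = 0" for y using h2 by (metis dot_lmul_matrix inner_zero_left)
  have P2: "y \<bullet> (A *v Phi i) = 0" for y using P1[of y] As by (metis dot_transpose inner_commute)
  have inv: "transpose (Xq i x) ** A ** Xq i x = A" for x
    using invariance[of "Xq i" "svcross (Phi i)" A x] d X0 h3 by blast
  define f where "f j = vel Phi XJ Xq v1 q qd j \<bullet> (inertia_hat (t j) *v vel Phi XJ Xq v1 q qd j)" for j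
  have "KE N Phi XJ Xq t v1 q qd = sum f {1..N}" unfolding KE_def f_def by simp
  also have "\<dots> = sum f {i - 1, i}"
  proof (rule sum.mono_neutral_right)
    show "{i - 1, i} \<subseteq> {1..N}" using i by auto
    show "\<forall>j\<in>{1..N} - {i - 1, i}. f j = 0" using h4 unfolding f_def by auto
  qed auto
  also have "\<dots> = f (i - 1) + f i"
  proof -
    have "i - 1 \<noteq> i" using i by auto
    then show ?thesis by (simp add: sum.insert)
  qed
  also have "\<dots> = 0"
  proof -
    define w where "w = vel Phi XJ Xq v1 q qd (i - 1)"
    define u where "u = XJ i *v w"
    define X where "X = Xq i (q i)"
    define s where "s = qd i"
    have vi: "vel Phi XJ Xq v1 q qd i = X *v u + s *\<^sub>R Phi i"
      using vel_step[of i] i unfolding w_def u_def X_def s_def by (simp add: matrix_vector_mul_assoc)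
    have "f i = (X *v u) \<bullet> (A *v (X *v u)) + s * ((X *v u) \<bullet> (A *v Phi i)) + s * (Phi i \<bullet> (A *v (X *v u)))
         + s * s * (Phi i \<bullet> (A *v Phi i))"
      unfolding f_def vi A_def[symmetric]
      by (simp add: matrix_vector_right_distrib mv_scale inner_add_left inner_add_right algebra_simps)
    also have "\<dots> = u \<bullet> (A *v u)" using P1 P2 quad_shift[of X u A] inv[of "q i"] unfolding X_def by simp
    finally have fi: "f i = u \<bullet> (A *v u)" .
    have "f (i - 1) = - (w \<bullet> ((transpose (XJ i) ** A ** XJ i) *v w))"
      unfolding f_def h1 w_def[symmetric] by (simp add: mv_uminus inner_minus_right)
    also have "\<dots> = - (u \<bullet> (A *v u))" unfolding u_def quad_shift by simp
    finally show ?thesis using fi by simp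
  qed
  finally show ?thesis .
qed



lemma add4: "a + c = 0 \<Longrightarrow> b + d = 0 \<Longrightarrow> a + b + (c + d) = (0::'a::ab_group_add)"
proof -
  assume "a + c = 0" "b + d = 0"
  moreover have "a + b + (c + d) = (a + c) + (b + d)" by (simp add: algebra_simps)
  ultimately show ?thesis by simp
qed

lemma T_add:
  assumes x: "x \<in> transfer_space N Phi XJ i" and y: "y \<in> transfer_space N Phi XJ i"
  shows "(\<lambda>j. x j + y j) \<in> transfer_space N Phi XJ i"
  using x y unfolding transfer_space_def params_def
  apply (auto simp: hat_add vector_matrix_mult_add_rdistrib matrix_add_ldistrib mm_add_r transpose_add)
  apply (rule add4; assumption)
  done

lemma T_zero: "(\<lambda>j. 0) \<in> transfer_space N Phi XJ i"
  unfolding transfer_space_def params_def by (simp add: hat_zero)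

lemma reach:
  assumes rinv: "\<forall>i\<in>{2..N}. \<exists>Y. XJ i ** Y = mat 1" and X0: "\<forall>i\<in>{2..N}. Xq i 0 = mat 1"
  shows "1 \<le> k \<Longrightarrow> k \<le> N \<Longrightarrow> \<exists>v1. vel Phi XJ Xq v1 (\<lambda>_. 0) (\<lambda>_. 0) k = u"
proof (induction k arbitrary: u)
  case 0 then show ?case by simp
next
  case (Suc k)
  show ?case
  proof (cases "k = 0")
    case True then show ?thesis by auto
  next
    case False
    then have K: "Suc k \<in> {2..N}" using Suc by auto
    obtain Y where Y: "XJ (Suc k) ** Y = mat 1" using rinv K by blast
    obtain v1 where v1: "vel Phi XJ Xq v1 (\<lambda>_. 0) (\<lambda>_. 0) k = Y *v u"
      using Suc.IH[of "Y *v u"] Suc.prems False by auto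
    have "vel Phi XJ Xq v1 (\<lambda>_. 0) (\<lambda>_. 0) (Suc k) = XJ (Suc k) *v (Y *v u)"
      using vel_step[of "Suc k" Phi XJ Xq v1 "\<lambda>_. 0" "\<lambda>_. 0"] K X0 v1 by simp
    also have "\<dots> = u" by (simp add: matrix_vector_mul_assoc Y)
    finally show ?thesis by blast
  qed
qed



lemma expand_g:
  assumes As: "transpose A = A"
  shows "(u + c *\<^sub>R P) \<bullet> (A *v (u + c *\<^sub>R P)) = u \<bullet> (A *v u) + 2 * c * (P \<bullet> (A *v u)) + c * c * (P \<bullet> (A *v (P::real^'n)))"
proof -
  have "u \<bullet> (A *v P) = P \<bullet> (A *v u)" by (metis As dot_transpose inner_commute)
  then show ?thesis
    by (simp add: matrix_vector_right_distrib mv_scale inner_add_left inner_add_right algebra_simps)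
qed

lemma node:
  assumes rinv: "\<forall>i\<in>{2..N}. \<exists>Y. XJ i ** Y = mat 1" and X0: "\<forall>i\<in>{2..N}. Xq i 0 = mat 1"
    and d: "\<forall>x. (Xq K has_vector_derivative - (svcross (Phi K) ** Xq K x)) (at x)"
    and K: "K \<in> {2..N}" and dp: "dp \<in> param_nullspace N Phi XJ Xq" and z: "\<forall>j>K. dp j = 0"
  shows "Phi K v* inertia_hat (dp K) = 0 \<and>
    transpose (svcross (Phi K)) ** inertia_hat (dp K) + inertia_hat (dp K) ** svcross (Phi K) = 0"
proof -
  define A where "A = inertia_hat (dp K)"
  have As: "transpose A = A" unfolding A_def by (rule hat_sym)
  define k where "k = K - 1"
  have Kk: "K = Suc k" and k1: "1 \<le> k" using K unfolding k_def by auto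
  define tm where "tm v1 q qd j = vel Phi XJ Xq v1 q qd j \<bullet> (inertia_hat (dp j) *v vel Phi XJ Xq v1 q qd j)" for v1 q qd j
  have KEs: "KE N Phi XJ Xq dp v1 q qd = (\<Sum>j=1..k. tm v1 q qd j) + tm v1 q qd K" for v1 q qd
  proof -
    have "KE N Phi XJ Xq dp v1 q qd = sum (tm v1 q qd) {1..N}" unfolding KE_def tm_def by simp
    also have "\<dots> = sum (tm v1 q qd) {1..K}"
    proof (rule sum.mono_neutral_right)
      show "{1..K} \<subseteq> {1..N}" using K by auto
      show "\<forall>j\<in>{1..N} - {1..K}. tm v1 q qd j = 0" using z unfolding tm_def by (auto simp: hat_zero)
    qed auto
    also have "\<dots> = (\<Sum>j=1..k. tm v1 q qd j) + tm v1 q qd K" unfolding Kk by simp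
    finally show ?thesis .
  qed
  have KE0: "KE N Phi XJ Xq dp v1 q qd = 0" for v1 q qd using dp by (simp add: nullspace_iff)
  define g where "g y = y \<bullet> (A *v y)" for y
  have key: "g (Xq K a *v u + s *\<^sub>R Phi K) = g u" for u a s
  proof -
    define q0 :: "nat \<Rightarrow> real" where "q0 = (\<lambda>_. 0)"
    obtain v1 where v1: "vel Phi XJ Xq v1 q0 q0 K = u"
      using reach[of N XJ Xq K Phi u] rinv X0 K unfolding q0_def by auto
    define w where "w = vel Phi XJ Xq v1 q0 q0 k"
    have uw: "u = XJ K *v w"
      using vel_step[of K Phi XJ Xq v1 q0 q0] K X0 v1 unfolding w_def k_def q0_def by simp
    define q where "q = q0(K := a)"
    define qd where "qd = q0(K := s)"
    have loc: "vel Phi XJ Xq v1 q qd j = vel Phi XJ Xq v1 q0 q0 j" if "j \<le> k" for j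
      by (rule vel_local) (use that Kk in \<open>auto simp: q_def qd_def\<close>)
    have F: "(\<Sum>j=1..k. tm v1 q qd j) = (\<Sum>j=1..k. tm v1 q0 q0 j)"
      by (rule sum.cong) (auto simp: tm_def loc)
    have velK: "vel Phi XJ Xq v1 q qd K = Xq K a *v u + s *\<^sub>R Phi K"
      using vel_step[of K Phi XJ Xq v1 q qd] K loc[of k] unfolding uw w_def k_def
      by (simp add: q_def qd_def matrix_vector_mul_assoc)
    have "tm v1 q qd K = g (Xq K a *v u + s *\<^sub>R Phi K)" unfolding tm_def g_def A_def velK ..
    moreover have "tm v1 q0 q0 K = g u" unfolding tm_def g_def A_def v1 ..
    moreover have "(\<Sum>j=1..k. tm v1 q qd j) + tm v1 q qd K = 0" using KEs KE0 by metis
    moreover have "(\<Sum>j=1..k. tm v1 q0 q0 j) + tm v1 q0 q0 K = 0" using KEs KE0 by metis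
    ultimately show ?thesis using F by simp
  qed
  have XK0: "Xq K 0 = mat 1" using X0 K by auto
  have P: "Phi K \<bullet> (A *v u) = 0" for u
  proof -
    have "g (u + 1 *\<^sub>R Phi K) = g u" using key[of 0 u 1] XK0 by simp
    moreover have "g (u + (-1) *\<^sub>R Phi K) = g u" using key[of 0 u "-1"] XK0 by simp
    ultimately show ?thesis unfolding g_def expand_g[OF As] by simp
  qed
  have P2: "Phi K v* A = 0"
    using P[of "Phi K v* A"] by (metis dot_lmul_matrix inner_eq_zero_iff)
  have inv: "transpose (Xq K a) ** A ** Xq K a = A" for a
  proof -
    define M where "M = transpose (Xq K a) ** A ** Xq K a - A"
    have t1: "transpose (transpose (Xq K a) ** A ** Xq K a) = transpose (Xq K a) ** A ** Xq K a"
      by (simp add: matrix_transpose_mul matrix_mul_assoc As)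
    have "transpose M = M" unfolding M_def
      by (simp only: diff_conv_add_uminus transpose_add transpose_uminus t1 As)
    moreover have "v \<bullet> (M *v v) = 0" for v
      using key[of a v 0] quad_shift[of "Xq K a" v A]
      unfolding M_def g_def by (simp add: matrix_vector_mult_diff_rdistrib inner_diff_right)
    ultimately have "M = 0" by (rule quad_zero)
    then show ?thesis unfolding M_def by simp
  qed
  have "transpose (svcross (Phi K)) ** A + A ** svcross (Phi K) = 0"
    by (rule invariance_conv[of "Xq K"]) (use d XK0 inv in auto)
  then show ?thesis using P2 unfolding A_def by simp
qed



lemma indep:
  assumes T: "\<forall>i\<in>{2..N}. t i \<in> transfer_space N Phi XJ i"
    and S: "(\<lambda>j. \<Sum>i\<in>{2..N}. t i j) = (\<lambda>j. 0)"
  shows "i \<in> {2..N} \<Longrightarrow> t i = (\<lambda>j. 0)"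
proof (induction "N - i" arbitrary: i rule: less_induct)
  case less
  have Ti: "t i \<in> transfer_space N Phi XJ i" using T less.prems by auto
  have other: "t i' i = 0" if "i' \<in> {2..N}" "i' \<noteq> i" for i'
  proof (cases "i < i'")
    case True
    then have "N - i' < N - i" using that less.prems by auto
    then show ?thesis using less.hyps[of i'] that by auto
  next
    case False
    then have "i' < i" using that by auto
    then have "inertia_hat (t i' i) = 0" using T that less.prems unfolding transfer_space_def by auto
    then show ?thesis by (rule hat_inj)
  qed
  have "(\<Sum>i'\<in>{2..N}. t i' i) = 0" using S by (metis (no_types, lifting))
  moreover have "(\<Sum>i'\<in>{2..N}. t i' i) = t i i + (\<Sum>i'\<in>{2..N} - {i}. t i' i)"
    using less.prems by (simp add: sum.remove)
  moreover have "(\<Sum>i'\<in>{2..N} - {i}. t i' i) = 0" using other by (intro sum.neutral) auto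
  ultimately have tii: "t i i = 0" by simp
  have "inertia_hat (t i (i - 1)) = 0" using Ti tii unfolding transfer_space_def by (simp add: hat_zero)
  then have tim: "t i (i - 1) = 0" by (rule hat_inj)
  have "t i j = 0" for j
  proof (cases "j \<in> {1..N}")
    case True
    show ?thesis
    proof (cases "j \<in> {i, i - 1}")
      case True then show ?thesis using tii tim by auto
    next
      case False
      then have "inertia_hat (t i j) = 0" using Ti \<open>j \<in> {1..N}\<close> unfolding transfer_space_def by auto
      then show ?thesis by (rule hat_inj)
    qed
  next
    case False then show ?thesis using Ti unfolding transfer_space_def params_def by auto
  qed
  then show ?case by auto
qed



lemma exist:
  assumes hs: "\<forall>i\<in>{2..N}. is_stransform (XJ i)" and X0: "\<forall>i\<in>{2..N}. Xq i 0 = mat 1"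
    and dd: "\<forall>i\<in>{2..N}. \<forall>x. (Xq i has_vector_derivative - (svcross (Phi i) ** Xq i x)) (at x)"
  shows "k \<le> N \<Longrightarrow> dp \<in> param_nullspace N Phi XJ Xq \<Longrightarrow> (\<forall>j>k. dp j = 0) \<Longrightarrow>
     \<exists>t. (\<forall>i\<in>{2..N}. t i \<in> transfer_space N Phi XJ i) \<and> dp = (\<lambda>j. \<Sum>i\<in>{2..N}. t i j)"
proof (induction k arbitrary: dp)
  case 0
  have "dp 0 = 0" using "0.prems" by (simp add: nullspace_iff params_def)
  then have "dp = (\<lambda>j. 0)" using "0.prems" by (metis neq0_conv)
  then show ?case using T_zero by (intro exI[of _ "\<lambda>i j. 0"]) auto
next
  case (Suc k)
  have rinv: "\<forall>i\<in>{2..N}. \<exists>Y. XJ i ** Y = mat 1" using hs stransform_rinv by blast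
  have dpN: "dp \<in> params N" and KE0: "\<And>v1 q qd. KE N Phi XJ Xq dp v1 q qd = 0"
    using Suc.prems by (auto simp: nullspace_iff)
  show ?case
  proof (cases "k = 0")
    case True
    have "inertia_hat (dp 1) = 0"
    proof (rule quad_zero[OF hat_sym])
      fix v1
      define tm where "tm j = vel Phi XJ Xq v1 (\<lambda>_. 0) (\<lambda>_. 0) j \<bullet> (inertia_hat (dp j) *v vel Phi XJ Xq v1 (\<lambda>_. 0) (\<lambda>_. 0) j)" for j
      have "KE N Phi XJ Xq dp v1 (\<lambda>_. 0) (\<lambda>_. 0) = sum tm {1..N}" unfolding KE_def tm_def by simp
      also have "\<dots> = sum tm {1}"
      proof (rule sum.mono_neutral_right)
        show "{1} \<subseteq> {1..N}" using Suc.prems by auto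
        show "\<forall>j\<in>{1..N} - {1}. tm j = 0" using Suc.prems True unfolding tm_def by (auto simp: hat_zero)
      qed auto
      also have "\<dots> = v1 \<bullet> (inertia_hat (dp 1) *v v1)" unfolding tm_def by simp
      finally show "v1 \<bullet> (inertia_hat (dp 1) *v v1) = 0" using KE0 by simp
    qed
    then have "dp 1 = 0" by (rule hat_inj)
    then have "\<forall>j>0. dp j = 0" using Suc.prems True by (metis One_nat_def less_Suc_eq_0_disj not_less_eq)
    then show ?thesis using Suc.IH[of dp] Suc.prems True by auto
  next
    case False
    define K where "K = Suc k"
    have K: "K \<in> {2..N}" using False Suc.prems unfolding K_def by auto
    have Km: "K - 1 = k" unfolding K_def by simp
    define A where "A = inertia_hat (dp K)"
    have nd: "Phi K v* A = 0 \<and> transpose (svcross (Phi K)) ** A + A ** svcross (Phi K) = 0"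
    proof -
      have d: "\<forall>x. (Xq K has_vector_derivative - (svcross (Phi K) ** Xq K x)) (at x)" using dd K by blast
      have z: "\<forall>j>K. dp j = 0" using Suc.prems unfolding K_def by blast
      show ?thesis unfolding A_def using node[of N XJ Xq K Phi dp] rinv X0 d K Suc.prems(2) z by blast
    qed
    obtain p' where p': "inertia_hat p' = transpose (XJ K) ** A ** XJ K"
      using hat_congr[of "XJ K" "dp K"] hs K unfolding A_def by blast
    define s where "s j = (if j = K then dp K else if j = k then - p' else 0)" for j
    have kK: "k \<noteq> K" unfolding K_def by simp
    have k1: "k \<in> {1..N}" using K False unfolding K_def by auto
    have sT: "s \<in> transfer_space N Phi XJ K"
      unfolding transfer_space_def params_def
    proof (intro CollectI conjI)
      show "\<forall>j. j \<notin> {1..N} \<longrightarrow> s j = 0" using K k1 unfolding s_def by auto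
      show "inertia_hat (s (K - 1)) = - (transpose (XJ K) ** inertia_hat (s K) ** XJ K)"
        unfolding Km s_def using kK p' A_def
        by (simp add: hat_scale[of "-1", simplified] )
      show "Phi K v* inertia_hat (s K) = 0" using nd unfolding s_def A_def by simp
      show "transpose (svcross (Phi K)) ** inertia_hat (s K) + inertia_hat (s K) ** svcross (Phi K) = 0"
        using nd unfolding s_def A_def by simp
      show "\<forall>j\<in>{1..N}. j \<notin> {K, K - 1} \<longrightarrow> inertia_hat (s j) = 0"
        unfolding s_def Km by (auto simp: hat_zero)
    qed
    define dp' where "dp' = (\<lambda>j. dp j - s j)"
    have "dp' \<in> param_nullspace N Phi XJ Xq"
    proof -
      have "dp' \<in> params N" using dpN sT unfolding dp'_def params_def transfer_space_def by auto
      moreover have "KE N Phi XJ Xq dp' v1 q qd = 0" for v1 q qd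
      proof -
        have "KE N Phi XJ Xq s v1 q qd = 0"
        proof (rule T_in_N)
          show "\<forall>x. (Xq K has_vector_derivative - (svcross (Phi K) ** Xq K x)) (at x)" using dd K by blast
          show "Xq K 0 = mat 1" using X0 K by blast
        qed (use K sT in auto)
        then show ?thesis unfolding dp'_def KE_diff KE0 by simp
      qed
      ultimately show ?thesis by (simp add: nullspace_iff)
    qed
    moreover have "\<forall>j>k. dp' j = 0"
      using Suc.prems unfolding dp'_def s_def K_def by auto
    ultimately obtain t' where t': "\<forall>i\<in>{2..N}. t' i \<in> transfer_space N Phi XJ i"
      and dpe: "dp' = (\<lambda>j. \<Sum>i\<in>{2..N}. t' i j)"
      using Suc.IH Suc.prems by (meson Suc_leD)
    define t where "t i = (\<lambda>j. t' i j + (if i = K then s j else 0))" for i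
    have "\<forall>i\<in>{2..N}. t i \<in> transfer_space N Phi XJ i"
    proof
      fix i assume i: "i \<in> {2..N}"
      show "t i \<in> transfer_space N Phi XJ i"
      proof (cases "i = K")
        case True then show ?thesis using T_add[where x="t' K" and y=s and N=N and Phi=Phi and XJ=XJ and i=K] t' sT i unfolding t_def by auto
      next
        case False then show ?thesis using t' i unfolding t_def by auto
      qed
    qed
    moreover have "dp = (\<lambda>j. \<Sum>i\<in>{2..N}. t i j)"
    proof
      fix j
      have "(\<Sum>i\<in>{2..N}. t i j) = (\<Sum>i\<in>{2..N}. t' i j) + (\<Sum>i\<in>{2..N}. if i = K then s j else 0)"
        unfolding t_def by (simp add: sum.distrib)
      also have "(\<Sum>i\<in>{2..N}. if i = K then s j else 0) = s j" using K by (simp add: sum.delta)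
      also have "(\<Sum>i\<in>{2..N}. t' i j) = dp' j" using dpe by simp
      finally show "dp j = (\<Sum>i\<in>{2..N}. t i j)" unfolding dp'_def by simp
    qed
    ultimately show ?thesis by blast
  qed
qed



theorem theorem1:
  fixes N :: nat
    and Phi :: "nat \<Rightarrow> sv"
    and XJ :: "nat \<Rightarrow> smat"
    and Xq :: "nat \<Rightarrow> real \<Rightarrow> smat"
  assumes "1 \<le> N"
    and "\<forall>i\<in>{2..N}. Phi i \<noteq> 0"
    and "\<forall>i\<in>{2..N}. is_stransform (XJ i)"
    and "\<forall>i\<in>{2..N}. \<forall>x. is_stransform (Xq i x)"
    and "\<forall>i\<in>{2..N}. Xq i 0 = mat 1"
    and "\<forall>i\<in>{2..N}. \<forall>x. (Xq i has_vector_derivative (- (svcross (Phi i) ** Xq i x))) (at x)"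
  shows "is_direct_sum (param_nullspace N Phi XJ Xq) (transfer_space N Phi XJ) {2..N}"
proof -
  note hs = assms(3) and X0 = assms(5) and dd = assms(6)
  have sub1: "param_nullspace N Phi XJ Xq \<subseteq> {(\<lambda>j. \<Sum>i\<in>{2..N}. t i j) | t. \<forall>i\<in>{2..N}. t i \<in> transfer_space N Phi XJ i}"
  proof
    fix dp assume dp: "dp \<in> param_nullspace N Phi XJ Xq"
    then have "\<forall>j>N. dp j = 0" by (simp add: nullspace_iff params_def)
    then show "dp \<in> {(\<lambda>j. \<Sum>i\<in>{2..N}. t i j) | t. \<forall>i\<in>{2..N}. t i \<in> transfer_space N Phi XJ i}"
      using exist[OF hs X0 dd, of N dp] dp by auto
  qed
  have sub2: "{(\<lambda>j. \<Sum>i\<in>{2..N}. t i j) | t. \<forall>i\<in>{2..N}. t i \<in> transfer_space N Phi XJ i} \<subseteq> param_nullspace N Phi XJ Xq"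
  proof
    fix x assume "x \<in> {(\<lambda>j. \<Sum>i\<in>{2..N}. t i j) | t. \<forall>i\<in>{2..N}. t i \<in> transfer_space N Phi XJ i}"
    then obtain t where t: "\<forall>i\<in>{2..N}. t i \<in> transfer_space N Phi XJ i" and x: "x = (\<lambda>j. \<Sum>i\<in>{2..N}. t i j)"
      by blast
    have "x \<in> params N"
      using t unfolding x params_def transfer_space_def by (auto intro!: sum.neutral)
    moreover have "KE N Phi XJ Xq x v1 q qd = 0" for v1 q qd
    proof -
      have "KE N Phi XJ Xq x v1 q qd = (\<Sum>i\<in>{2..N}. KE N Phi XJ Xq (t i) v1 q qd)"
        unfolding x by (rule KE_sum) simp
      also have "\<dots> = 0"
      proof (rule sum.neutral, rule ballI)
        fix i assume i: "i \<in> {2..N}"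
        show "KE N Phi XJ Xq (t i) v1 q qd = 0"
        proof (rule T_in_N)
          show "\<forall>x. (Xq i has_vector_derivative - (svcross (Phi i) ** Xq i x)) (at x)" using dd i by blast
          show "Xq i 0 = mat 1" using X0 i by blast
        qed (use i t in auto)
      qed
      finally show ?thesis .
    qed
    ultimately show "x \<in> param_nullspace N Phi XJ Xq" by (simp add: nullspace_iff)
  qed
  show ?thesis
    unfolding is_direct_sum_def
  proof (intro conjI allI impI)
    show "param_nullspace N Phi XJ Xq = {(\<lambda>j. \<Sum>i\<in>{2..N}. t i j) | t. \<forall>i\<in>{2..N}. t i \<in> transfer_space N Phi XJ i}"
      using sub1 sub2 by blast
  next
    fix t assume "(\<forall>i\<in>{2..N}. t i \<in> transfer_space N Phi XJ i) \<and> (\<lambda>j. \<Sum>i\<in>{2..N}. t i j) = (\<lambda>j. 0)"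
    then show "\<forall>i\<in>{2..N}. t i = (\<lambda>j. 0)" using indep by blast
  qed
qed


end
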